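(* Let $\Bbbk$ be a field, $n\ge2$, $q\in\Bbbk$ a primitive $n$-th root of unity, $C_n=\langle g\rangle$ the cyclic group of order $n$ and $A$ a unital associative $\Bbbk$-algebra. Let $\cdot:\Bbbk C_n\otimes A\to A$ be a partial action of $\Bbbk C_n$ on $A$. Then for each $w\in A$ such that $g^i\cdot w=q^{-i}(g^i\cdot1_A)w$ for all $0\le i\le n-1$, one has $$g^i\cdot\big(w^\ell(g^j\cdot a)w^k\big)=q^{-i(\ell+k)}(g^i\cdot1_A)w^\ell(g^{i+j}\cdot a)w^k$$ for all $a\in A$, $\ell,k\ge0$ and $0\le i,j\le n-1$; in particular $g^i\cdot w^k=q^{-ik}(g^i\cdot1_A)w^k$. Moreover, if the partial action is symmetric, then $g^i\cdot(w^\ell(g^j\cdot a)w^k)=q^{-i(\ell+k)}w^\ell(g^{i+j}\cdot a)w^k(g^i\cdot1_A)$.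
   Context: $\Bbbk C_n$ is the group Hopf algebra with $g$ group-like; exponents of $g$ are read modulo $n$. A partial action of a bialgebra $H$ on $A$ is a linear map $\cdot:H\otimes A\to A$ with $1_H\cdot a=a$, $h\cdot(ab)=(h_1\cdot a)(h_2\cdot b)$, $h\cdot(k\cdot a)=(h_1\cdot1_A)(h_2k\cdot a)$; it is symmetric if moreover $h\cdot(k\cdot a)=(h_1k\cdot a)(h_2\cdot1_A)$. *)

theory Defs
  imports Main
begin

definition k_algebra :: "('k::field \<Rightarrow> 'a::ring_1 \<Rightarrow> 'a) \<Rightarrow> bool" where
  "k_algebra smul \<longleftrightarrow>
     (\<forall>c a b. smul c (a + b) = smul c a + smul c b) \<and>
     (\<forall>c d a. smul (c + d) a = smul c a + smul d a) \<and>
     (\<forall>c d a. smul (c * d) a = smul c (smul d a)) \<and>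
     (\<forall>a. smul 1 a = a) \<and>
     (\<forall>c a b. smul c (a * b) = smul c a * b) \<and>
     (\<forall>c a b. smul c (a * b) = a * smul c b)"

text \<open>A linear map
  k C_n \<otimes> A \<rightarrow> A is the same as the family of k-linear maps act i = (g^i \<cdot> _),
  0 \<le> i < n, on the basis g^0,...,g^(n-1); since all axioms are linear in h, it suffices
  to impose them on the basis, where \<Delta>(g^i) = g^i \<otimes> g^i.  Exponents are read mod n.\<close>
definition partial_action_Cn ::
  "nat \<Rightarrow> ('k::field \<Rightarrow> 'a::ring_1 \<Rightarrow> 'a) \<Rightarrow> (nat \<Rightarrow> 'a \<Rightarrow> 'a) \<Rightarrow> bool" where
  "partial_action_Cn n smul act \<longleftrightarrow>
     (\<forall>i<n. \<forall>a b. act i (a + b) = act i a + act i b) \<and>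
     (\<forall>i<n. \<forall>c a. act i (smul c a) = smul c (act i a)) \<and>
     (\<forall>a. act 0 a = a) \<and>
     (\<forall>i<n. \<forall>a b. act i (a * b) = act i a * act i b) \<and>
     (\<forall>i<n. \<forall>j<n. \<forall>a. act i (act j a) = act i 1 * act ((i + j) mod n) a)"

definition symmetric_partial_action_Cn ::
  "nat \<Rightarrow> ('k::field \<Rightarrow> 'a::ring_1 \<Rightarrow> 'a) \<Rightarrow> (nat \<Rightarrow> 'a \<Rightarrow> 'a) \<Rightarrow> bool" where
  "symmetric_partial_action_Cn n smul act \<longleftrightarrow>
     partial_action_Cn n smul act \<and>
     (\<forall>i<n. \<forall>j<n. \<forall>a. act i (act j a) = act ((i + j) mod n) a * act i 1)"

definition primitive_root :: "nat \<Rightarrow> 'k::field \<Rightarrow> bool" where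
  "primitive_root n q \<longleftrightarrow> q ^ n = 1 \<and> (\<forall>m. 0 < m \<and> m < n \<longrightarrow> q ^ m \<noteq> 1)"

end

theory Submission
  imports Defs
begin

theorem corollary3p6:
  fixes n :: nat and q :: "'k::field" and smul :: "'k \<Rightarrow> 'a::ring_1 \<Rightarrow> 'a"
    and act :: "nat \<Rightarrow> 'a \<Rightarrow> 'a" and w :: 'a
  assumes "n \<ge> 2"
    and "primitive_root n q"
    and "k_algebra smul"
    and "partial_action_Cn n smul act"
    and hw: "\<forall>i<n. act i w = smul (inverse q ^ i) (act i 1 * w)"
  shows "(\<forall>a l k i j. i < n \<longrightarrow> j < n \<longrightarrow>
            act i (w ^ l * act j a * w ^ k)
              = smul (inverse q ^ (i * (l + k))) (act i 1 * w ^ l * act ((i + j) mod n) a * w ^ k))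
       \<and> (\<forall>k i. i < n \<longrightarrow> act i (w ^ k) = smul (inverse q ^ (i * k)) (act i 1 * w ^ k))
       \<and> (symmetric_partial_action_Cn n smul act \<longrightarrow>
           (\<forall>a l k i j. i < n \<longrightarrow> j < n \<longrightarrow>
              act i (w ^ l * act j a * w ^ k)
                = smul (inverse q ^ (i * (l + k))) (w ^ l * act ((i + j) mod n) a * w ^ k * act i 1)))"
proof -
  have s1: "\<And>c a b. smul c a * b = smul c (a * b)"
    and s2: "\<And>c a b. a * smul c b = smul c (a * b)"
    and s3: "\<And>c d a. smul c (smul d a) = smul (c * d) a"
    and s4: "\<And>a. smul 1 a = a"
    using assms(3) unfolding k_algebra_def by metis+
  have amul: "\<And>i a b. i < n \<Longrightarrow> act i (a * b) = act i a * act i b"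
    and a0: "\<And>a. act 0 a = a"
    and aa: "\<And>i j a. i < n \<Longrightarrow> j < n \<Longrightarrow> act i (act j a) = act i 1 * act ((i + j) mod n) a"
    using assms(4) unfolding partial_action_Cn_def by blast+
  have q0: "q \<noteq> 0"
  proof
    assume "q = 0"
    with assms(1,2) show False unfolding primitive_root_def by (simp add: power_0_left)
  qed
  have ss: "smul a x * smul b y = smul (a * b) (x * y)" for a b x y
    by (simp add: s1 s2 s3 mult.commute)
  have right: "act i x * act i 1 = act i x" if "i < n" for i x
    using amul[OF that, of x 1] by simp
  have left: "act i 1 * act i x = act i x" if "i < n" for i x
    using amul[OF that, of 1 x] by simp
  have ewe: "act i 1 * w * act i 1 = act i 1 * w" if "i < n" for i
  proof -
    let ?c = "inverse q ^ i"
    have c0: "?c \<noteq> 0" using q0 by simp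
    have "smul ?c (act i 1 * w * act i 1) = smul ?c (act i 1 * w)"
      using right[OF that, of w] hw that by (simp add: s1)
    then have "smul (inverse ?c) (smul ?c (act i 1 * w * act i 1)) = smul (inverse ?c) (smul ?c (act i 1 * w))"
      by simp
    then show ?thesis using c0 by (simp add: s3 s4)
  qed
  have P: "act i 1 * w ^ l * act i 1 = act i 1 * w ^ l" if "i < n" for i l
  proof (induction l)
    case 0
    then show ?case using left[OF that, of 1] by simp
  next
    case (Suc l)
    have "act i 1 * w ^ Suc l * act i 1 = (act i 1 * w ^ l * act i 1) * (w * act i 1)"
      by (metis Suc mult.assoc power_Suc2)
    also have "\<dots> = act i 1 * w ^ l * (act i 1 * w * act i 1)"
      by (simp only: mult.assoc)
    also have "\<dots> = (act i 1 * w ^ l * act i 1) * w"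
      using ewe[OF that] by (simp add: mult.assoc)
    also have "\<dots> = act i 1 * w ^ Suc l"
      by (metis Suc mult.assoc power_Suc2)
    finally show ?case .
  qed
  have pw: "act i (w ^ l) = smul ((inverse q ^ i) ^ l) (act i 1 * w ^ l)" if "i < n" for i l
  proof (induction l)
    case 0
    then show ?case by (simp add: s4)
  next
    case (Suc l)
    have "act i (w ^ Suc l) = act i (w ^ l) * act i w"
      by (metis amul[OF that] power_Suc2)
    also have "\<dots> = smul ((inverse q ^ i) ^ l * inverse q ^ i) ((act i 1 * w ^ l) * (act i 1 * w))"
      using Suc hw that by (simp add: ss)
    also have "\<dots> = smul ((inverse q ^ i) ^ Suc l) (act i 1 * w ^ l * act i 1 * w)"
      by (simp add: mult.assoc mult.commute)
    also have "\<dots> = smul ((inverse q ^ i) ^ Suc l) (act i 1 * w ^ Suc l)"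
      using P[OF that, of l] by (metis power_Suc2 mult.assoc)
    finally show ?case .
  qed
  have main: "act i (w ^ l * act j a * w ^ k)
              = smul (inverse q ^ (i * (l + k))) (act i 1 * w ^ l * act ((i + j) mod n) a * w ^ k)"
    if "i < n" "j < n" for a l k i j
  proof -
    let ?e = "act i 1" and ?X = "act ((i + j) mod n) a"
    have idem: "?e * (?e * x) = ?e * x" for x
      using left[OF that(1), of 1] by (metis mult.assoc)
    have eX: "?e * ?X * ?e = ?e * ?X"
      using right[OF that(1), of "act j a"] aa[OF that] by simp
    have "act i (w ^ l * act j a * w ^ k) = act i (w ^ l) * act i (act j a) * act i (w ^ k)"
      using amul[OF that(1)] by simp
    also have "\<dots> = smul ((inverse q ^ i) ^ l) (?e * w ^ l) * (?e * ?X * smul ((inverse q ^ i) ^ k) (?e * w ^ k))"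
      using pw[OF that(1)] aa[OF that] by (simp only: mult.assoc)
    also have "\<dots> = smul ((inverse q ^ i) ^ l * (inverse q ^ i) ^ k) ((?e * w ^ l) * (?e * ?X * (?e * w ^ k)))"
      unfolding s2[of "?e * ?X"] by (rule ss)
    also have "(?e * w ^ l) * (?e * ?X * (?e * w ^ k)) = (?e * w ^ l * ?e) * (?e * ?X * ?e) * w ^ k"
      by (simp add: mult.assoc idem)
    also have "(?e * w ^ l * ?e) * (?e * ?X * ?e) * w ^ k = ?e * w ^ l * ?X * w ^ k"
    proof -
      have "(?e * w ^ l * ?e) * (?e * ?X * ?e) * w ^ k = (?e * w ^ l) * (?e * ?X) * w ^ k"
        by (simp only: P[OF that(1), of l] eX)
      also have "\<dots> = (?e * w ^ l * ?e) * ?X * w ^ k" by (simp add: mult.assoc)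
      also have "\<dots> = ?e * w ^ l * ?X * w ^ k" by (simp only: P[OF that(1), of l])
      finally show ?thesis .
    qed
    also have "(inverse q ^ i) ^ l * (inverse q ^ i) ^ k = inverse q ^ (i * (l + k))"
      by (simp add: power_mult power_add)
    finally show ?thesis .
  qed
  have part2: "act i (w ^ k) = smul (inverse q ^ (i * k)) (act i 1 * w ^ k)" if "i < n" for k i
    using pw[OF that, of k] by (simp add: power_mult)
  have part3: "act i (w ^ l * act j a * w ^ k)
                = smul (inverse q ^ (i * (l + k))) (w ^ l * act ((i + j) mod n) a * w ^ k * act i 1)"
    if sym: "symmetric_partial_action_Cn n smul act" and "i < n" "j < n" for a l k i j
  proof -
    have central: "act i 1 * x = x * act i 1" for x
    proof -
      define j' where "j' = (n - i) mod n"
      have j': "j' < n" using assms(1) by (simp add: j'_def)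
      have m: "(i + j') mod n = 0"
      proof (cases "i = 0")
        case True then show ?thesis by (simp add: j'_def)
      next
        case False then have "i + j' = n" using that(2) by (simp add: j'_def)
        then show ?thesis by simp
      qed
      have "act i (act j' x) = act i 1 * x"
        using aa[OF that(2) j'] m a0 by simp
      moreover have "act i (act j' x) = x * act i 1"
        using sym that(2) j' m a0 unfolding symmetric_partial_action_Cn_def by simp
      ultimately show ?thesis by simp
    qed
    have "act i 1 * w ^ l * act ((i + j) mod n) a * w ^ k = w ^ l * act ((i + j) mod n) a * w ^ k * act i 1"
      using central[of "w ^ l * act ((i + j) mod n) a * w ^ k"] by (metis mult.assoc)
    then show ?thesis using main[OF that(2,3), of l a k] by simp
  qed
  show ?thesis using main part2 part3 by blast
qed

end
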